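(* Let $0<\alpha<\beta<\tfrac12$ and $\rho=\frac{\log\beta}{\log\alpha}$. There exist constants $K_1,K_2>0$ such that for all $y,\tilde y\in A_\alpha$ with $|y-\tilde y|$ sufficiently small, $$K_1|y-\tilde y|^\rho\ \ge\ |I_p|\ \ge\ K_2|y-\tilde y|^\rho,\qquad I_p:=\sum_{i=0}^\infty\beta^i\big(y_{-i-1}-\tilde y_{-i-1}\big).$$
   Context: $A_\alpha\subset[0,1]$ is the Cantor set with $A_\alpha=\alpha A_\alpha\cup(\alpha A_\alpha+1-\alpha)$. The skinny baker's map $B_\alpha(x,y)=(2x,\alpha y)$ if $0\le x<\tfrac12$ and $(2x-1,\alpha y+1-\alpha)$ if $\tfrac12\le x<1$ is invertible on $[0,1)\times A_\alpha$ with inverse $B_\alpha^{-1}(x,y)=(x/2,y/\alpha)$ if $y\le\tfrac12$ and $((x+1)/2,(y-(1-\alpha))/\alpha)$ if $y>\tfrac12$. For $n\in\mathbb N$, $y_{-n}$ denotes the second coordinate of $B_\alpha^{-n}(x,y)$ (it depends only on $y$); similarly $\tilde y_{-n}$. *)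

theory Defs
  imports "HOL-Analysis.Analysis"
begin

definition cantor_step :: "real \<Rightarrow> real set \<Rightarrow> real set" where
  "cantor_step \<alpha> S = ((\<lambda>y. \<alpha> * y) ` S) \<union> ((\<lambda>y. \<alpha> * y + 1 - \<alpha>) ` S)"

text \<open>The Cantor set A_alpha in [0,1]: the attractor of the IFS, i.e. the intersection of
  the iterates of the Hutchinson operator applied to [0,1]; it is the unique nonempty compact
  set with A = alpha A \<union> (alpha A + 1 - alpha).\<close>
definition cantor_set :: "real \<Rightarrow> real set" where
  "cantor_set \<alpha> = (\<Inter>n. (cantor_step \<alpha> ^^ n) {0..1})"

text \<open>Second coordinate of the inverse skinny baker's map (depends only on y).\<close>
definition baker_inv_y :: "real \<Rightarrow> real \<Rightarrow> real" where
  "baker_inv_y \<alpha> y = (if y \<le> 1/2 then y / \<alpha> else (y - (1 - \<alpha>)) / \<alpha>)"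

text \<open>y_{-n}: second coordinate of B_alpha^{-n}(x,y).\<close>
definition y_back :: "real \<Rightarrow> nat \<Rightarrow> real \<Rightarrow> real" where
  "y_back \<alpha> n y = (baker_inv_y \<alpha> ^^ n) y"

end

theory Submission
  imports Defs
begin

lemma step_sub:
  assumes "0 < \<alpha>" "\<alpha> < 1/2"
  shows "(cantor_step \<alpha> ^^ n) {0..1} \<subseteq> {0..1}"
proof (induction n)
  case 0 then show ?case by simp
next
  case (Suc n)
  show ?case
  proof
    fix y assume "y \<in> (cantor_step \<alpha> ^^ Suc n) {0..1}"
    then obtain z where z: "z \<in> (cantor_step \<alpha> ^^ n) {0..1}"
      and "y = \<alpha> * z \<or> y = \<alpha> * z + 1 - \<alpha>"
      by (auto simp: cantor_step_def)
    moreover have "0 \<le> z" "z \<le> 1" using z Suc by auto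
    moreover have "\<alpha> * z \<le> \<alpha>" using \<open>z \<le> 1\<close> assms by (simp add: mult_left_le)
    moreover have "0 \<le> \<alpha> * z" using \<open>0 \<le> z\<close> assms by simp
    ultimately show "y \<in> {0..1}" using assms
      unfolding atLeastAtMost_iff by (elim disjE) linarith+
  qed
qed

lemma cantor_bounds:
  assumes "0 < \<alpha>" "\<alpha> < 1/2" "y \<in> cantor_set \<alpha>"
  shows "0 \<le> y" "y \<le> 1"
proof -
  have "y \<in> (cantor_step \<alpha> ^^ 0) {0..1}" using assms(3) unfolding cantor_set_def by blast
  then show "0 \<le> y" "y \<le> 1" by auto
qed

lemma inv_in:
  assumes a: "0 < \<alpha>" "\<alpha> < 1/2" and y: "y \<in> cantor_set \<alpha>"
  shows "baker_inv_y \<alpha> y \<in> cantor_set \<alpha>"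
  unfolding cantor_set_def
proof
  fix n
  have "y \<in> (cantor_step \<alpha> ^^ Suc n) {0..1}" using y unfolding cantor_set_def by blast
  then obtain z where z: "z \<in> (cantor_step \<alpha> ^^ n) {0..1}"
    and yz: "y = \<alpha> * z \<or> y = \<alpha> * z + 1 - \<alpha>"
    by (auto simp: cantor_step_def)
  have "0 \<le> z" "z \<le> 1" using z step_sub[OF a, of n] by auto
  moreover have "\<alpha> * z \<le> \<alpha>" using \<open>z \<le> 1\<close> a by (simp add: mult_left_le)
  moreover have "0 \<le> \<alpha> * z" using \<open>0 \<le> z\<close> a by simp
  ultimately have "baker_inv_y \<alpha> y = z" using yz a
  proof (elim disjE)
    assume "y = \<alpha> * z" "\<alpha> * z \<le> \<alpha>"
    then have "y \<le> 1/2" using a by linarith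
    then show ?thesis using a \<open>y = \<alpha> * z\<close> unfolding baker_inv_y_def by auto
  next
    assume "y = \<alpha> * z + 1 - \<alpha>" "0 \<le> \<alpha> * z"
    then have "\<not> y \<le> 1/2" using a by auto
    then show ?thesis using a \<open>y = \<alpha> * z + 1 - \<alpha>\<close> unfolding baker_inv_y_def by (auto simp: field_simps)
  qed
  then show "baker_inv_y \<alpha> y \<in> (cantor_step \<alpha> ^^ n) {0..1}" using z by simp
qed

lemma digit_eq:
  assumes a: "0 < \<alpha>" "\<alpha> < 1/2" and y: "y \<in> cantor_set \<alpha>"
  shows "y = \<alpha> * baker_inv_y \<alpha> y + (if y \<le> 1/2 then 0 else 1 - \<alpha>)"
    and "y \<le> 1/2 \<Longrightarrow> y \<le> \<alpha>" and "y > 1/2 \<Longrightarrow> y \<ge> 1 - \<alpha>"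
proof -
  show e: "y = \<alpha> * baker_inv_y \<alpha> y + (if y \<le> 1/2 then 0 else 1 - \<alpha>)"
    using a unfolding baker_inv_y_def by auto
  have "0 \<le> baker_inv_y \<alpha> y" "baker_inv_y \<alpha> y \<le> 1"
    using cantor_bounds[OF a inv_in[OF a y]] by auto
  then have "\<alpha> * baker_inv_y \<alpha> y \<le> \<alpha>" "0 \<le> \<alpha> * baker_inv_y \<alpha> y"
    using a by (auto simp: mult_left_le)
  then show "y \<le> 1/2 \<Longrightarrow> y \<le> \<alpha>" and "y > 1/2 \<Longrightarrow> y \<ge> 1 - \<alpha>" using e by auto
qed

lemma y_back_Suc: "y_back \<alpha> (Suc k) y = baker_inv_y \<alpha> (y_back \<alpha> k y)"
  by (simp add: y_back_def)

lemma y_back_in: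
  assumes a: "0 < \<alpha>" "\<alpha> < 1/2" and y: "y \<in> cantor_set \<alpha>"
  shows "y_back \<alpha> k y \<in> cantor_set \<alpha>"
  by (induction k) (auto simp: y_back_Suc y inv_in[OF a] y_back_def[of _ 0])

lemma agree_step:
  assumes a: "0 < \<alpha>" "\<alpha> < 1/2" and y: "y \<in> cantor_set \<alpha>" and y': "y' \<in> cantor_set \<alpha>"
    and ag: "(y_back \<alpha> k y \<le> 1/2) = (y_back \<alpha> k y' \<le> 1/2)"
  shows "y_back \<alpha> k y - y_back \<alpha> k y' = \<alpha> * (y_back \<alpha> (Suc k) y - y_back \<alpha> (Suc k) y')"
  using digit_eq(1)[OF a y_back_in[OF a y, of k]] digit_eq(1)[OF a y_back_in[OF a y', of k]] ag
  by (auto simp: y_back_Suc algebra_simps split: if_splits)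

lemma differ_bound:
  assumes a: "0 < \<alpha>" "\<alpha> < 1/2" and y: "y \<in> cantor_set \<alpha>" and y': "y' \<in> cantor_set \<alpha>"
    and ag: "(y_back \<alpha> k y \<le> 1/2) \<noteq> (y_back \<alpha> k y' \<le> 1/2)"
  shows "1 - 2*\<alpha> \<le> \<bar>y_back \<alpha> k y - y_back \<alpha> k y'\<bar>"
  using digit_eq(2,3)[OF a y_back_in[OF a y, of k]] digit_eq(2,3)[OF a y_back_in[OF a y', of k]] ag
  by (cases "y_back \<alpha> k y \<le> 1/2") auto

lemma diff_le1:
  assumes a: "0 < \<alpha>" "\<alpha> < 1/2" and y: "y \<in> cantor_set \<alpha>" and y': "y' \<in> cantor_set \<alpha>"
  shows "\<bar>y_back \<alpha> k y - y_back \<alpha> k y'\<bar> \<le> 1"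
  using cantor_bounds[OF a y_back_in[OF a y, of k]] cantor_bounds[OF a y_back_in[OF a y', of k]]
  by auto

lemma prefix:
  assumes a: "0 < \<alpha>" "\<alpha> < 1/2" and y: "y \<in> cantor_set \<alpha>" and y': "y' \<in> cantor_set \<alpha>"
  shows "(\<forall>j<k. (y_back \<alpha> j y \<le> 1/2) = (y_back \<alpha> j y' \<le> 1/2)) \<Longrightarrow>
     y - y' = \<alpha>^k * (y_back \<alpha> k y - y_back \<alpha> k y')"
proof (induction k)
  case 0 then show ?case by (simp add: y_back_def)
next
  case (Suc k)
  then have "y - y' = \<alpha>^k * (y_back \<alpha> k y - y_back \<alpha> k y')" by auto
  also have "\<dots> = \<alpha>^Suc k * (y_back \<alpha> (Suc k) y - y_back \<alpha> (Suc k) y')"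
    using agree_step[OF a y y', of k] Suc.prems by auto
  finally show ?case .
qed

lemma exists_differ:
  assumes a: "0 < \<alpha>" "\<alpha> < 1/2" and y: "y \<in> cantor_set \<alpha>" and y': "y' \<in> cantor_set \<alpha>"
    and ne: "y \<noteq> y'"
  shows "\<exists>k. (y_back \<alpha> k y \<le> 1/2) \<noteq> (y_back \<alpha> k y' \<le> 1/2)"
proof (rule ccontr)
  assume "\<not> ?thesis"
  then have all: "\<forall>j. (y_back \<alpha> j y \<le> 1/2) = (y_back \<alpha> j y' \<le> 1/2)" by auto
  obtain k where k: "\<alpha>^k < \<bar>y - y'\<bar>" using real_arch_pow_inv[of "\<bar>y - y'\<bar>" \<alpha>] ne a by auto
  have "y - y' = \<alpha>^k * (y_back \<alpha> k y - y_back \<alpha> k y')" using prefix[OF a y y', of k] all by auto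
  then have "\<bar>y - y'\<bar> = \<alpha>^k * \<bar>y_back \<alpha> k y - y_back \<alpha> k y'\<bar>" using a by (simp add: abs_mult)
  also have "\<dots> \<le> \<alpha>^k" using diff_le1[OF a y y', of k] a by (simp add: mult_left_le)
  finally show False using k by simp
qed

lemma key:
  assumes a: "0 < \<alpha>" "\<alpha> < 1/2" and y: "y \<in> cantor_set \<alpha>" and y': "y' \<in> cantor_set \<alpha>"
    and ne: "y \<noteq> y'"
  shows "\<exists>n t. 1 - 2*\<alpha> \<le> \<bar>t\<bar> \<and> \<bar>t\<bar> \<le> 1 \<and> y - y' = \<alpha>^n * t \<and>
     (\<forall>i<n. y_back \<alpha> (Suc i) y - y_back \<alpha> (Suc i) y' = \<alpha>^(n - Suc i) * t)"
proof -
  define P where "P k \<longleftrightarrow> (y_back \<alpha> k y \<le> 1/2) \<noteq> (y_back \<alpha> k y' \<le> 1/2)" for k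
  obtain k0 where "P k0" using exists_differ[OF assms] unfolding P_def by auto
  define n where "n = (LEAST k. P k)"
  have Pn: "P n" unfolding n_def by (rule LeastI, fact)
  have lt: "\<forall>j<n. \<not> P j" unfolding n_def using not_less_Least by blast
  define t where "t = y_back \<alpha> n y - y_back \<alpha> n y'"
  have pre: "\<And>k. k \<le> n \<Longrightarrow> y - y' = \<alpha>^k * (y_back \<alpha> k y - y_back \<alpha> k y')"
  proof -
    fix k assume "k \<le> n"
    then have "\<forall>j<k. (y_back \<alpha> j y \<le> 1/2) = (y_back \<alpha> j y' \<le> 1/2)"
      using lt unfolding P_def by auto
    then show "y - y' = \<alpha>^k * (y_back \<alpha> k y - y_back \<alpha> k y')" by (rule prefix[OF a y y'])
  qed
  have e: "y - y' = \<alpha>^n * t" using pre[of n] unfolding t_def by simp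
  have "\<forall>i<n. y_back \<alpha> (Suc i) y - y_back \<alpha> (Suc i) y' = \<alpha>^(n - Suc i) * t"
  proof (intro allI impI)
    fix i assume "i < n"
    then have "n = Suc i + (n - Suc i)" by simp
    then have "\<alpha>^n = \<alpha>^Suc i * \<alpha>^(n - Suc i)" by (metis power_add)
    have "\<alpha>^Suc i * (y_back \<alpha> (Suc i) y - y_back \<alpha> (Suc i) y') = y - y'"
      using pre[of "Suc i"] \<open>i < n\<close> by (simp only: Suc_le_eq)
    also have "\<dots> = \<alpha>^Suc i * (\<alpha>^(n - Suc i) * t)"
      using e \<open>\<alpha>^n = _\<close> by (simp only: mult.assoc)
    finally have "\<alpha>^Suc i * (y_back \<alpha> (Suc i) y - y_back \<alpha> (Suc i) y') = \<alpha>^Suc i * (\<alpha>^(n - Suc i) * t)" .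
    then show "y_back \<alpha> (Suc i) y - y_back \<alpha> (Suc i) y' = \<alpha>^(n - Suc i) * t"
      using a by (subst (asm) mult_left_cancel) auto
  qed
  moreover have "1 - 2*\<alpha> \<le> \<bar>t\<bar>" using differ_bound[OF a y y', of n] Pn unfolding P_def t_def by auto
  moreover have "\<bar>t\<bar> \<le> 1" using diff_le1[OF a y y'] unfolding t_def by auto
  ultimately show ?thesis using e by blast
qed

lemma geo_sum:
  fixes a b :: real
  shows "(\<Sum>i<n. b^i * a^(n - Suc i)) * (b - a) = b^n - a^n"
proof (cases n)
  case 0 then show ?thesis by simp
next
  case (Suc m)
  have "b^Suc m - a^Suc m = (b - a) * (\<Sum>p<Suc m. b^p * a^(m - p))" by (rule diff_power_eq_sum)
  then show ?thesis using Suc by (simp add: mult.commute)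
qed

lemma ip_bounds:
  fixes D :: "nat \<Rightarrow> real" and \<alpha> \<beta> t :: real
  assumes a: "0 < \<alpha>" "\<alpha> < \<beta>" "\<beta> < 1/2"
    and D1: "\<And>k. \<bar>D k\<bar> \<le> 1"
    and Dn: "\<And>i. i < n \<Longrightarrow> D (Suc i) = \<alpha>^(n - Suc i) * t"
    and t1: "1 - 2*\<alpha> \<le> \<bar>t\<bar>" and t2: "\<bar>t\<bar> \<le> 1"
  shows "\<bar>\<Sum>i. \<beta>^i * D (i + 1)\<bar> \<le> \<beta>^n * (1/(\<beta>-\<alpha>) + 1/(1-\<beta>))"
    and "\<bar>\<Sum>i. \<beta>^i * D (i + 1)\<bar> \<ge> (1-2*\<alpha>) * ((\<beta>^n - \<alpha>^n)/(\<beta>-\<alpha>)) - \<beta>^n/(1-\<beta>)"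
proof -
  define f where "f i = \<beta>^i * D (i + 1)" for i
  have bf: "norm (f i) \<le> \<beta>^i" for i
    using D1[of "i+1"] a unfolding f_def by (simp add: abs_mult mult_left_le)
  have sg: "summable (\<lambda>i. \<beta>^i)" using a by simp
  have sf: "summable f"
    by (rule summable_comparison_test[OF _ sg]) (use bf in auto)
  have split: "suminf f = (\<Sum>j. f (j + n)) + (\<Sum>i<n. f i)"
    by (rule suminf_split_initial_segment[OF sf])
  define R where "R = (\<Sum>j. f (j + n))"
  have sg2: "summable (\<lambda>j. \<beta>^n * \<beta>^j)" using sg by (rule summable_mult)
  have "norm R \<le> (\<Sum>j. \<beta>^n * \<beta>^j)"
    unfolding R_def
    by (rule norm_suminf_le[OF _ sg2]) (use bf in \<open>metis power_add mult.commute real_norm_def\<close>)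
  also have "\<dots> = \<beta>^n / (1 - \<beta>)"
    using suminf_mult[OF sg, of "\<beta>^n"] suminf_geometric[of \<beta>] a by simp
  finally have Rb: "\<bar>R\<bar> \<le> \<beta>^n / (1 - \<beta>)" by simp
  define G where "G = (\<beta>^n - \<alpha>^n)/(\<beta>-\<alpha>)"
  have "(\<Sum>i<n. f i) = (\<Sum>i<n. t * (\<beta>^i * \<alpha>^(n - Suc i)))"
    unfolding f_def using Dn by (intro sum.cong) auto
  also have "\<dots> = t * G"
  proof -
    have "(\<Sum>i<n. \<beta>^i * \<alpha>^(n - Suc i)) = G"
      using geo_sum[of \<beta> \<alpha> n] a unfolding G_def by (simp add: eq_divide_eq)
    then show ?thesis by (simp add: sum_distrib_left[symmetric])
  qed
  finally have P: "(\<Sum>i<n. f i) = t * G" .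
  have "\<alpha>^n \<le> \<beta>^n" using a by (intro power_mono) auto
  then have G0: "0 \<le> G" unfolding G_def using a by auto
  have "G \<le> \<beta>^n/(\<beta>-\<alpha>)" unfolding G_def using a by (intro divide_right_mono) auto
  have tG: "\<bar>t * G\<bar> = \<bar>t\<bar> * G" using G0 by (simp add: abs_mult)
  have "\<bar>t\<bar> * G \<le> G" using t2 G0 by (simp add: mult_left_le_one_le)
  have "(1-2*\<alpha>) * G \<le> \<bar>t\<bar> * G" using t1 G0 by (rule mult_right_mono)
  have S: "(\<Sum>i. \<beta>^i * D (i + 1)) = R + t * G" using split P unfolding R_def f_def by simp
  show "\<bar>\<Sum>i. \<beta>^i * D (i + 1)\<bar> \<le> \<beta>^n * (1/(\<beta>-\<alpha>) + 1/(1-\<beta>))"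
    unfolding S using Rb tG \<open>\<bar>t\<bar> * G \<le> G\<close> \<open>G \<le> \<beta>^n/(\<beta>-\<alpha>)\<close>
    by (simp add: distrib_left)
  show "\<bar>\<Sum>i. \<beta>^i * D (i + 1)\<bar> \<ge> (1-2*\<alpha>) * ((\<beta>^n - \<alpha>^n)/(\<beta>-\<alpha>)) - \<beta>^n/(1-\<beta>)"
    unfolding S G_def[symmetric] using Rb tG \<open>(1-2*\<alpha>) * G \<le> \<bar>t\<bar> * G\<close>
    by (smt (verit))
qed

lemma pow_powr:
  fixes \<alpha> \<beta> :: real
  assumes "0 < \<alpha>" "\<alpha> < 1" "0 < \<beta>"
  shows "(\<alpha>^n) powr (ln \<beta> / ln \<alpha>) = \<beta>^n"
proof -
  have "ln \<alpha> \<noteq> 0" using assms by simp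
  have "ln ((\<alpha>^n) powr (ln \<beta> / ln \<alpha>)) = (ln \<beta> / ln \<alpha>) * (real n * ln \<alpha>)"
    using assms by (simp add: ln_powr ln_realpow)
  also have "\<dots> = ln (\<beta>^n)" using \<open>ln \<alpha> \<noteq> 0\<close> assms by (simp add: ln_realpow)
  finally have "ln ((\<alpha>^n) powr (ln \<beta> / ln \<alpha>)) = ln (\<beta>^n)" .
  moreover have "(\<alpha>^n) powr (ln \<beta> / ln \<alpha>) > 0" "\<beta>^n > 0" using assms by auto
  ultimately show ?thesis using ln_inj_iff by blast
qed

theorem lemma3p8:
  fixes \<alpha> \<beta> :: real
  assumes "0 < \<alpha>" and "\<alpha> < \<beta>" and "\<beta> < 1/2"
  shows "\<exists>K1 K2 \<delta>. K1 > 0 \<and> K2 > 0 \<and> \<delta> > 0 \<and>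
    (\<forall>y \<in> cantor_set \<alpha>. \<forall>y' \<in> cantor_set \<alpha>. \<bar>y - y'\<bar> < \<delta> \<longrightarrow>
      (let \<rho> = ln \<beta> / ln \<alpha>;
           Ip = (\<Sum>i. \<beta> ^ i * (y_back \<alpha> (i + 1) y - y_back \<alpha> (i + 1) y'))
       in K1 * \<bar>y - y'\<bar> powr \<rho> \<ge> \<bar>Ip\<bar> \<and> \<bar>Ip\<bar> \<ge> K2 * \<bar>y - y'\<bar> powr \<rho>))"
proof -
  have a: "0 < \<alpha>" "\<alpha> < 1/2" using assms by auto
  define \<rho> where "\<rho> = ln \<beta> / ln \<alpha>"
  have "ln \<alpha> < 0" "ln \<beta> < 0" using assms by auto
  then have \<rho>0: "0 < \<rho>" unfolding \<rho>_def by (simp add: divide_neg_neg)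
  define C where "C = 1/(\<beta>-\<alpha>) + 1/(1-\<beta>)"
  define c0 where "c0 = (1-2*\<alpha>)/(\<beta>-\<alpha>) - 1/(1-\<beta>)"
  have C0: "C > 0" unfolding C_def using assms by (intro add_pos_pos) auto
  have "(1-2*\<alpha>)*(1-\<beta>) - (\<beta>-\<alpha>) = (1-2*\<beta>)*(1-\<alpha>)" by (simp add: algebra_simps)
  moreover have "(1-2*\<beta>)*(1-\<alpha>) > 0" using assms by auto
  ultimately have "(1-2*\<alpha>)*(1-\<beta>) > (\<beta>-\<alpha>)" by linarith
  moreover have "c0 = ((1-2*\<alpha>)*(1-\<beta>) - (\<beta>-\<alpha>)) / ((\<beta>-\<alpha>)*(1-\<beta>))"
    unfolding c0_def using assms by (simp add: field_simps)
  ultimately have c00: "c0 > 0" using assms by (simp del: diff_diff_eq)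
  define \<epsilon> where "\<epsilon> = c0 * (\<beta>-\<alpha>) / (2*(1-2*\<alpha>))"
  have \<epsilon>0: "\<epsilon> > 0" unfolding \<epsilon>_def using c00 assms by auto
  obtain N where N: "(\<alpha>/\<beta>)^N < \<epsilon>" using real_arch_pow_inv[OF \<epsilon>0, of "\<alpha>/\<beta>"] assms by auto
  define \<delta> where "\<delta> = (1-2*\<alpha>) * \<alpha>^N"
  have \<delta>0: "\<delta> > 0" unfolding \<delta>_def using assms by auto
  have pc: "(1-2*\<alpha>) powr \<rho> > 0" using assms by auto
  define K1 where "K1 = C / (1-2*\<alpha>) powr \<rho>"
  define K2 where "K2 = c0 / 2"
  have main: "K1 * \<bar>y - y'\<bar> powr \<rho> \<ge> \<bar>\<Sum>i. \<beta> ^ i * (y_back \<alpha> (i + 1) y - y_back \<alpha> (i + 1) y')\<bar> \<and>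
     \<bar>\<Sum>i. \<beta> ^ i * (y_back \<alpha> (i + 1) y - y_back \<alpha> (i + 1) y')\<bar> \<ge> K2 * \<bar>y - y'\<bar> powr \<rho>"
    if y: "y \<in> cantor_set \<alpha>" and y': "y' \<in> cantor_set \<alpha>" and d: "\<bar>y - y'\<bar> < \<delta>" for y y'
  proof (cases "y = y'")
    case True then show ?thesis by simp
  next
    case False
    obtain n t where t1: "1 - 2*\<alpha> \<le> \<bar>t\<bar>" and t2: "\<bar>t\<bar> \<le> 1" and e: "y - y' = \<alpha>^n * t"
      and Dn: "\<forall>i<n. y_back \<alpha> (Suc i) y - y_back \<alpha> (Suc i) y' = \<alpha>^(n - Suc i) * t"
      using key[OF a y y' False] by blast
    define D where "D k = y_back \<alpha> k y - y_back \<alpha> k y'" for k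
    have B: "\<bar>\<Sum>i. \<beta>^i * D (i + 1)\<bar> \<le> \<beta>^n * (1/(\<beta>-\<alpha>) + 1/(1-\<beta>))"
         "\<bar>\<Sum>i. \<beta>^i * D (i + 1)\<bar> \<ge> (1-2*\<alpha>) * ((\<beta>^n - \<alpha>^n)/(\<beta>-\<alpha>)) - \<beta>^n/(1-\<beta>)"
      using ip_bounds[OF assms, of D n t] diff_le1[OF a y y'] Dn t1 t2 unfolding D_def by auto
    define Ip where "Ip = (\<Sum>i. \<beta> ^ i * (y_back \<alpha> (i + 1) y - y_back \<alpha> (i + 1) y'))"
    have IpD: "Ip = (\<Sum>i. \<beta>^i * D (i + 1))" unfolding Ip_def D_def by simp
    define u where "u = \<bar>y - y'\<bar>"
    have an: "0 < \<alpha>^n" using assms by simp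
    have u_eq: "u = \<alpha>^n * \<bar>t\<bar>" unfolding u_def e using an by (simp add: abs_mult)
    have ul: "(1-2*\<alpha>) * \<alpha>^n \<le> u" unfolding u_eq using t1 an by (simp add: mult.commute)
    have uu: "u \<le> \<alpha>^n" unfolding u_eq using t2 an by (simp add: mult_left_le)
    have nN: "N \<le> n"
    proof (rule ccontr)
      assume "\<not> N \<le> n"
      then have "\<alpha>^N \<le> \<alpha>^n" using assms by (intro power_decreasing) auto
      then have "\<delta> \<le> (1-2*\<alpha>) * \<alpha>^n" unfolding \<delta>_def using assms by (intro mult_left_mono) auto
      then show False using ul d unfolding u_def by linarith
    qed
    have pb: "(\<alpha>^n) powr \<rho> = \<beta>^n" unfolding \<rho>_def using assms by (intro pow_powr) auto
    have "((1-2*\<alpha>) * \<alpha>^n) powr \<rho> \<le> u powr \<rho>"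
      using ul \<rho>0 assms by (intro powr_mono2) auto
    then have up1: "(1-2*\<alpha>) powr \<rho> * \<beta>^n \<le> u powr \<rho>"
      using assms an pb by (simp add: powr_mult)
    have up2: "u powr \<rho> \<le> \<beta>^n" using uu \<rho>0 pb by (metis powr_mono2 less_imp_le abs_ge_zero u_def)
    have "\<bar>Ip\<bar> \<le> C * \<beta>^n" using B(1) IpD unfolding C_def by (simp add: mult.commute)
    also have "\<dots> \<le> K1 * u powr \<rho>"
    proof -
      have "C * ((1-2*\<alpha>) powr \<rho> * \<beta>^n) \<le> C * u powr \<rho>" using up1 C0 by simp
      then show ?thesis unfolding K1_def using pc by (simp add: field_simps)
    qed
    finally have U: "\<bar>Ip\<bar> \<le> K1 * u powr \<rho>" .
    have "(\<alpha>/\<beta>)^n \<le> (\<alpha>/\<beta>)^N" using nN assms by (intro power_decreasing) auto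
    then have "(\<alpha>/\<beta>)^n < \<epsilon>" using N by linarith
    then have "\<alpha>^n < \<epsilon> * \<beta>^n" using assms by (simp add: power_divide divide_less_eq)
    then have "(1-2*\<alpha>)/(\<beta>-\<alpha>) * \<alpha>^n \<le> (1-2*\<alpha>)/(\<beta>-\<alpha>) * (\<epsilon> * \<beta>^n)"
      using assms by (intro mult_left_mono) auto
    also have "\<dots> = c0/2 * \<beta>^n"
    proof -
      have "1-2*\<alpha> \<noteq> 0" "\<beta>-\<alpha> \<noteq> 0" using assms by auto
      moreover have "\<And>x y c :: real. x \<noteq> 0 \<Longrightarrow> y \<noteq> 0 \<Longrightarrow> x/y*(c*y/(2*x)) = c/2"
        by (simp add: field_simps)
      ultimately have "(1-2*\<alpha>)/(\<beta>-\<alpha>) * \<epsilon> = c0/2" unfolding \<epsilon>_def by blast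
      then show ?thesis by (metis mult.assoc)
    qed
    finally have ae: "(1-2*\<alpha>)/(\<beta>-\<alpha>) * \<alpha>^n \<le> c0/2 * \<beta>^n" .
    have "(1-2*\<alpha>) * ((\<beta>^n - \<alpha>^n)/(\<beta>-\<alpha>)) - \<beta>^n/(1-\<beta>) = c0 * \<beta>^n - (1-2*\<alpha>)/(\<beta>-\<alpha>) * \<alpha>^n"
      unfolding c0_def by (simp add: algebra_simps diff_divide_distrib)
    then have "\<bar>Ip\<bar> \<ge> c0/2 * \<beta>^n" using B(2) IpD ae by linarith
    moreover have "c0/2 * \<beta>^n \<ge> K2 * u powr \<rho>" unfolding K2_def using up2 c00 by simp
    ultimately show ?thesis using U unfolding Ip_def u_def by linarith
  qed
  show ?thesis
    apply (rule exI[of _ K1], rule exI[of _ K2], rule exI[of _ \<delta>])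
    using main C0 pc c00 \<delta>0 unfolding K1_def K2_def Let_def \<rho>_def by auto
qed
end
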